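(* There exists a simple temporal graph $\mathcal G$ whose strict-journey reachability graph $\mathcal C(\mathcal G)$ is not isomorphic to the non-strict-journey reachability graph of any temporal graph $\mathcal H$. (For instance, $\mathcal G$ the path $a-b-c$ with $\lambda(ab)=\lambda(bc)=\{1\}$.)
   Context: A temporal graph is a triple $\mathcal G=(V,E,\lambda)$ where $V$ is a finite vertex set, $E$ is a set of undirected edges on $V$, and $\lambda:E\to 2^{\mathbb N}\setminus\{\emptyset\}$ assigns to each edge a nonempty set of presence times. The footprint of $\mathcal G$ is the static graph $(V,E)$. A contact is a pair $(e,t)$ with $e\in E$ and $t\in\lambda(e)$. A journey from $u$ to $v$ is a sequence of contacts $(e_1,t_1),\dots,(e_k,t_k)$, $k\ge 1$, such that $e_1,\dots,e_k$ form a path from $u$ to $v$ in the footprint and $t_1\le t_2\le\dots\le t_k$ (a non-strict journey); it is strict if $t_1<t_2<\dots<t_k$. $\mathcal G$ is simple if $|\lambda(e)|=1$ for every edge $e$. The reachability graph $\mathcal C(\mathcal G)$ (with respect to a chosen journey notion) is the directed graph on $V$ having an arc $(u,v)$, $u\neq v$, if and only if there is a journey from $u$ to $v$. Reachability graphs are compared up to isomorphism of directed graphs. *)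

theory Defs
  imports Main
begin

definition temporal_graph :: "'a set \<Rightarrow> 'a set set \<Rightarrow> ('a set \<Rightarrow> nat set) \<Rightarrow> bool" where
  "temporal_graph V E lam \<longleftrightarrow> finite V
     \<and> (\<forall>e\<in>E. \<exists>u v. u \<in> V \<and> v \<in> V \<and> u \<noteq> v \<and> e = {u, v})
     \<and> (\<forall>e\<in>E. lam e \<noteq> {})"

definition simple_tg :: "'a set set \<Rightarrow> ('a set \<Rightarrow> nat set) \<Rightarrow> bool" where
  "simple_tg E lam \<longleftrightarrow> (\<forall>e\<in>E. card (lam e) = 1)"

definition journey :: "bool \<Rightarrow> 'a set set \<Rightarrow> ('a set \<Rightarrow> nat set) \<Rightarrow> 'a \<Rightarrow> 'a \<Rightarrow> bool" where
  "journey strict E lam u v \<longleftrightarrow> (\<exists>vs ts.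
     length vs \<ge> 2 \<and> hd vs = u \<and> last vs = v \<and> distinct vs
     \<and> length ts = length vs - 1
     \<and> (\<forall>i < length ts. {vs ! i, vs ! (i+1)} \<in> E \<and> ts ! i \<in> lam {vs ! i, vs ! (i+1)})
     \<and> (if strict then sorted_wrt (<) ts else sorted ts))"

definition reach_arcs :: "bool \<Rightarrow> 'a set \<Rightarrow> 'a set set \<Rightarrow> ('a set \<Rightarrow> nat set) \<Rightarrow> ('a \<times> 'a) set" where
  "reach_arcs strict V E lam = {(u, v). u \<in> V \<and> v \<in> V \<and> u \<noteq> v \<and> journey strict E lam u v}"

definition digraph_iso :: "'a set \<Rightarrow> ('a \<times> 'a) set \<Rightarrow> 'b set \<Rightarrow> ('b \<times> 'b) set \<Rightarrow> bool" where
  "digraph_iso V1 A1 V2 A2 \<longleftrightarrow> (\<exists>f. bij_betw f V1 V2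
     \<and> (\<forall>u\<in>V1. \<forall>v\<in>V1. (u, v) \<in> A1 \<longleftrightarrow> (f u, f v) \<in> A2))"

end

theory Submission
  imports Defs
begin

lemma edge_journey:
  assumes "{u,v} \<in> F" "t \<in> mu {u,v}" "u \<noteq> v"
  shows "journey s F mu u v"
  unfolding journey_def
  apply (rule exI[of _ "[u,v]"], rule exI[of _ "[t]"])
  using assms by auto

lemma two_journey:
  assumes "{u,v} \<in> F" "t1 \<in> mu {u,v}" "{v,w} \<in> F" "t2 \<in> mu {v,w}"
    "u \<noteq> v" "v \<noteq> w" "u \<noteq> w" "t1 \<le> t2"
  shows "journey False F mu u w"
  unfolding journey_def
  apply (rule exI[of _ "[u,v,w]"], rule exI[of _ "[t1,t2]"])
  using assms by (auto simp: numeral_2_eq_2 less_Suc_eq)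

lemma first_edge:
  assumes "journey s F mu u v"
  shows "\<exists>w t. {u,w} \<in> F \<and> t \<in> mu {u,w} \<and> w \<noteq> u"
proof -
  obtain vs ts where h: "length vs \<ge> 2" "hd vs = u" "distinct vs"
     "length ts = length vs - 1"
     "\<forall>i < length ts. {vs ! i, vs ! (i+1)} \<in> F \<and> ts ! i \<in> mu {vs ! i, vs ! (i+1)}"
    using assms unfolding journey_def by blast
  have "0 < length ts" using h by auto
  with h have "{vs!0, vs!1} \<in> F" "ts!0 \<in> mu {vs!0, vs!1}" by auto
  moreover have "vs!0 = u" using h by (metis hd_conv_nth list.size(3) not_numeral_le_zero)
  moreover have l: "1 < length vs" "0 < length vs" using h(1) by auto
  have "vs!1 \<noteq> vs!0" using nth_eq_iff_index_eq[OF h(3) l] by simp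
  ultimately show ?thesis by metis
qed

lemma noj:
  assumes "journey True {{0::nat,1},{1,2}} (\<lambda>_. {1}) u v" "{u,v} \<notin> {{0::nat,1},{1,2}}"
  shows False
proof -
  let ?E = "{{0::nat,1},{1,2}}"
  obtain vs ts where h0: "length vs \<ge> 2 \<and> hd vs = u \<and> last vs = v \<and> distinct vs
     \<and> length ts = length vs - 1
     \<and> (\<forall>i < length ts. {vs ! i, vs ! (i+1)} \<in> ?E \<and> ts ! i \<in> (\<lambda>_. {1::nat}) {vs ! i, vs ! (i+1)})
     \<and> (if True then sorted_wrt (<) ts else sorted ts)"
    using assms(1) unfolding journey_def by (elim exE) (rule that)
  then have h: "length vs \<ge> 2" "hd vs = u" "last vs = v"
     "length ts = length vs - 1"
     "\<forall>i < length ts. {vs ! i, vs ! (i+1)} \<in> ?E \<and> ts ! i = 1"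
     "sorted_wrt (<) ts"
    by simp_all
  show False
  proof (cases "length vs = 2")
    case True
    have ne: "vs \<noteq> []" using h(1) by auto
    have "vs!0 = u" using h(2) ne by (simp add: hd_conv_nth)
    moreover have "vs!1 = v" using h(3) ne True by (simp add: last_conv_nth)
    moreover have "0 < length ts" using h(4) True by simp
    then have "{vs!0, vs!(0+1)} \<in> ?E" using h(5)[rule_format, of 0] by (simp only:)
    ultimately have "{u, v} \<in> ?E" by simp
    then show False using assms(2) by (simp only:)
  next
    case False
    then have l: "length ts \<ge> 2" using h(1,4) by linarith
    then have "ts!0 < ts!1" using h(6) sorted_wrt_nth_less[of "(<)" ts 0 1] by simp
    moreover have "ts!0 = 1" using l h(5) by (metis less_le_trans numeral_2_eq_2 zero_less_Suc)
    moreover have "ts!1 = 1" using l h(5) by (metis One_nat_def Suc_le_lessD numeral_2_eq_2)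
    ultimately show False by simp
  qed
qed

theorem mainTheorem4:
  shows "\<exists>(V :: nat set) E lam. temporal_graph V E lam \<and> simple_tg E lam \<and>
    (\<forall>(W :: 'b set) F mu. temporal_graph W F mu \<longrightarrow>
       \<not> digraph_iso V (reach_arcs True V E lam) W (reach_arcs False W F mu))"
proof (intro exI conjI allI impI notI)
  let ?V = "{0::nat,1,2}" and ?E = "{{0::nat,1},{1,2}}" and ?lam = "\<lambda>_::nat set. {1::nat}"
  show "temporal_graph ?V ?E ?lam" unfolding temporal_graph_def
  proof (intro conjI ballI)
    fix e assume "e \<in> ?E"
    then consider "e = {0,1}" | "e = {1,2}" by blast
    then show "\<exists>u v. u \<in> ?V \<and> v \<in> ?V \<and> u \<noteq> v \<and> e = {u, v}"
      by cases (rule exI[of _ 0], rule exI[of _ 1], simp, rule exI[of _ 1], rule exI[of _ 2], simp)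
  qed auto
  show "simple_tg ?E ?lam" unfolding simple_tg_def by auto
  fix W :: "'b set" and F mu
  assume tg: "temporal_graph W F mu"
    and iso: "digraph_iso ?V (reach_arcs True ?V ?E ?lam) W (reach_arcs False W F mu)"
  obtain f where bij: "bij_betw f ?V W"
    and pres: "\<forall>u\<in>?V. \<forall>v\<in>?V. (u, v) \<in> reach_arcs True ?V ?E ?lam \<longleftrightarrow> (f u, f v) \<in> reach_arcs False W F mu"
    using iso unfolding digraph_iso_def by blast
  define a b c where "a = f 0" "b = f 1" "c = f 2"
  have im: "f ` ?V = W" using bij by (simp only: bij_betw_def)
  have W: "W = {a,b,c}" unfolding a_b_c_def im[symmetric] by (simp only: image_insert image_empty)
  have inj: "inj_on f ?V" by (rule bij_betw_imp_inj_on[OF bij])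
  have ne: "\<And>x y. x \<in> ?V \<Longrightarrow> y \<in> ?V \<Longrightarrow> x \<noteq> y \<Longrightarrow> f x \<noteq> f y"
  proof
    fix x y assume "x \<in> ?V" "y \<in> ?V" "x \<noteq> y" "f x = f y"
    then show False using inj_onD[OF inj \<open>f x = f y\<close>] by simp
  qed
  have d: "a \<noteq> b" "b \<noteq> c" "a \<noteq> c" unfolding a_b_c_def
    by (rule ne, simp, simp, simp)+
  have j01: "journey True ?E ?lam 0 1" by (rule edge_journey) auto
  have j21: "journey True ?E ?lam 2 1" by (rule edge_journey) (auto simp: insert_commute)
  have P: "\<And>u v. u \<in> ?V \<Longrightarrow> v \<in> ?V \<Longrightarrow> u \<noteq> v \<Longrightarrow>
      journey True ?E ?lam u v \<longleftrightarrow> journey False F mu (f u) (f v)"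
  proof -
    fix u v assume uv: "u \<in> ?V" "v \<in> ?V" "u \<noteq> v"
    have fW: "f u \<in> W" "f v \<in> W" using imageI[OF uv(1), of f] imageI[OF uv(2), of f] unfolding im by simp_all
    have "f u \<noteq> f v" using ne uv by blast
    then show "journey True ?E ?lam u v \<longleftrightarrow> journey False F mu (f u) (f v)"
      using pres[rule_format, OF uv(1,2)] uv fW unfolding reach_arcs_def by simp
  qed
  have ab: "journey False F mu a b" using P[of 0 1] j01 unfolding a_b_c_def by simp
  have cb: "journey False F mu c b" using P[of 2 1] j21 unfolding a_b_c_def by simp
  have nac: "\<not> journey False F mu a c"
  proof
    assume "journey False F mu a c"
    then have "journey True ?E ?lam 0 2" using P[of 0 2] unfolding a_b_c_def by simp
    then show False using noj[of 0 2] by (simp add: doubleton_eq_iff)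
  qed
  have nca: "\<not> journey False F mu c a"
  proof
    assume "journey False F mu c a"
    then have "journey True ?E ?lam 2 0" using P[of 2 0] unfolding a_b_c_def by simp
    then show False using noj[of 2 0] by (simp add: doubleton_eq_iff)
  qed
  have EW: "\<forall>e\<in>F. \<exists>u v. u \<in> W \<and> v \<in> W \<and> u \<noteq> v \<and> e = {u, v}"
    using tg[unfolded temporal_graph_def] by (elim conjE)
  have inW: "\<And>x y. {x,y} \<in> F \<Longrightarrow> y \<in> W"
  proof -
    fix x y assume "{x,y} \<in> F"
    then obtain u v where "u \<in> W" "v \<in> W" "{x,y} = {u,v}" using EW by blast
    then show "y \<in> W" by (auto simp: doubleton_eq_iff)
  qed
  obtain w1 t1 where e1: "{a,w1} \<in> F" "t1 \<in> mu {a,w1}" "w1 \<noteq> a" using first_edge[OF ab] by blast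
  have "w1 = b"
  proof -
    have "w1 \<in> {a,b,c}" using inW[OF e1(1)] W by simp
    moreover have "w1 \<noteq> c" using e1 edge_journey nac by metis
    ultimately show ?thesis using e1(3) by auto
  qed
  obtain w2 t2 where e2: "{c,w2} \<in> F" "t2 \<in> mu {c,w2}" "w2 \<noteq> c" using first_edge[OF cb] by blast
  have "w2 = b"
  proof -
    have "w2 \<in> {a,b,c}" using inW[OF e2(1)] W by simp
    moreover have "w2 \<noteq> a" using e2 edge_journey nca by metis
    ultimately show ?thesis using e2(3) by auto
  qed
  show False
  proof (cases "t1 \<le> t2")
    case True
    have "journey False F mu a c"
      by (rule two_journey[of a b F t1 mu c t2]) (use e1 e2 \<open>w1 = b\<close> \<open>w2 = b\<close> d True in \<open>auto simp: insert_commute\<close>)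
    with nac show False by simp
  next
    case False
    have "journey False F mu c a"
      by (rule two_journey[of c b F t2 mu a t1]) (use e1 e2 \<open>w1 = b\<close> \<open>w2 = b\<close> d False in \<open>auto simp: insert_commute\<close>)
    with nca show False by simp
  qed
qed

end
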